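(* Let $\mu$ be a probability measure on $\mathbb{R}$, absolutely continuous with density $f$, whose support is not included in $(-\infty,0)$. Assume there is a complex valued function $k$ on $\mathbb{R}$ such that $f(t)=\int_{\mathbb{R}}e^{iut}k(u)\,du$ for all $t\ge0$, and that 1. the absolute moments $M_n=\int_{\mathbb{R}}|u|^n|k(u)|\,du$, $n\ge0$, are finite and $\limsup_n M_n/n!<\infty$; 2. $k$ does not vanish on any interval of $\mathbb{R}$. Then $f$ is bounded on $[0,\infty)$, and for every $g\in L^1([0,\infty))$, if $\int_0^\infty f(t+s)g(s)\,ds=0$ for all $t\ge0$ then $g=0$ almost everywhere. In particular, $\mu$ is characterized by the restrictions of $\mu$ and $\mu*\mu$ to $[0,\infty)$ (any probability measure $\mu_1$ on $\mathbb{R}$ with $\mu_1=\mu$ and $\mu_1*\mu_1=\mu*\mu$ on $[0,\infty)$ equals $\mu$), and $\mu\in\mathscr{C}$. Moreover the restriction of $f$ to $[0,\infty)$ admits an analytic continuation on $\mathbb{R}$ (namely $t\mapsto\int_{\mathbb{R}}e^{iut}k(u)\,du$ is real-analytic on $\mathbb{R}$).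
   Context: $\mathscr{C}$ is the set of probability measures $\mu$ on $\mathbb{R}$ such that every probability measure $\mu_1$ with $\mu_1^{*n}=\mu^{*n}$ on $[0,\infty)$ for all $n\ge1$ ($*n$ = $n$-fold convolution power) equals $\mu$. *)

theory Defs
  imports "HOL-Probability.Probability"
begin

fun conv_pow :: "real measure \<Rightarrow> nat \<Rightarrow> real measure" where
  "conv_pow M 0 = return borel 0"
| "conv_pow M (Suc n) = (if n = 0 then M else M \<star> conv_pow M n)"

definition agree_on_nonneg :: "real measure \<Rightarrow> real measure \<Rightarrow> bool" where
  "agree_on_nonneg M N \<longleftrightarrow> (\<forall>A \<in> sets borel. A \<subseteq> {0..} \<longrightarrow> emeasure M A = emeasure N A)"

definition real_prob :: "real measure \<Rightarrow> bool" where
  "real_prob M \<longleftrightarrow> prob_space M \<and> sets M = sets borel"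

definition class_C :: "real measure set" where
  "class_C = {\<mu>. real_prob \<mu> \<and>
     (\<forall>\<mu>1. real_prob \<mu>1 \<and> (\<forall>n\<ge>1. agree_on_nonneg (conv_pow \<mu>1 n) (conv_pow \<mu> n)) \<longrightarrow> \<mu>1 = \<mu>)}"

definition msupport :: "real measure \<Rightarrow> real set" where
  "msupport M = {x. \<forall>e>0. emeasure M (ball x e) > 0}"

definition real_analytic_on :: "(real \<Rightarrow> complex) \<Rightarrow> real set \<Rightarrow> bool" where
  "real_analytic_on F S \<longleftrightarrow> (\<forall>x\<in>S. \<exists>r>0. \<exists>c::nat \<Rightarrow> complex.
      \<forall>t\<in>ball x r. (\<lambda>n. c n * complex_of_real ((t - x) ^ n)) sums F t)"

end

theory Submission
  imports Defs "HOL-Complex_Analysis.Complex_Analysis"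
begin


lemma space_borel_sets: "sets M = sets (borel::real measure) \<Longrightarrow> space M = UNIV"
  using sets_eq_imp_space_eq by fastforce

lemma char_zero_finite:
  assumes "finite_measure M" "sets M = sets borel"
  shows "char M 0 = complex_of_real (measure M UNIV)"
  using assms by (simp add: char_def space_borel_sets scaleR_conv_of_real)

lemma finite_measure_char_unique:
  fixes \<alpha> \<beta> :: "real measure"
  assumes fa: "finite_measure \<alpha>" and fb: "finite_measure \<beta>"
    and sa: "sets \<alpha> = sets borel" and sb: "sets \<beta> = sets borel"
    and ch: "\<And>t. char \<alpha> t = char \<beta> t"
  shows "\<alpha> = \<beta>"
proof -
  interpret A: finite_measure \<alpha> by fact
  interpret B: finite_measure \<beta> by fact
  have spa: "space \<alpha> = UNIV" and spb: "space \<beta> = UNIV" using sa sb space_borel_sets by auto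
  have ceq: "measure \<alpha> UNIV = measure \<beta> UNIV"
    using ch[of 0] char_zero_finite[OF fa sa] char_zero_finite[OF fb sb] by simp
  define c where "c = measure \<alpha> UNIV"
  have c0: "c \<ge> 0" unfolding c_def by simp
  have eA: "emeasure \<alpha> UNIV = ennreal c" using A.emeasure_eq_measure spa c_def by simp
  have eB: "emeasure \<beta> UNIV = ennreal c" using B.emeasure_eq_measure spb c_def ceq by simp
  show ?thesis
  proof (cases "c = 0")
    case True
    show ?thesis
    proof (rule measure_eqI[OF sa[folded sb]])
      fix A assume "A \<in> sets \<alpha>"
      have "emeasure \<alpha> A \<le> emeasure \<alpha> UNIV" using spa by (metis emeasure_space)
      moreover have "emeasure \<beta> A \<le> emeasure \<beta> UNIV" using spb by (metis emeasure_space)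
      ultimately show "emeasure \<alpha> A = emeasure \<beta> A" using eA eB True by simp
    qed
  next
    case False
    then have cpos: "c > 0" using c0 by simp
    define r where "r = 1 / c"
    have r0: "r > 0" using cpos r_def by simp
    have emd: "emeasure (density M (\<lambda>_. ennreal r)) A = ennreal r * emeasure M A"
      if "A \<in> sets M" for M :: "real measure" and A
      using that by (simp add: emeasure_density nn_integral_cmult_indicator)
    have rd: "real_distribution (density M (\<lambda>_. ennreal r))"
      if "sets M = sets borel" "emeasure M UNIV = ennreal c" for M :: "real measure"
    proof -
      have sp: "space M = UNIV" using that space_borel_sets by auto
      have "emeasure (density M (\<lambda>_. ennreal r)) (space (density M (\<lambda>_. ennreal r))) = 1"
        using emd[of UNIV M] sp that cpos r_def
        by (simp add: ennreal_mult[symmetric])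
      then show ?thesis using that
        by (auto simp: real_distribution_def real_distribution_axioms_def intro!: prob_spaceI)
    qed
    have chd: "char (density M (\<lambda>_. ennreal r)) t = r * char M t"
      if sM[measurable_cong]: "sets M = sets borel" for M :: "real measure" and t
      unfolding char_def using r0
      by (subst integral_density) (auto simp: scaleR_conv_of_real integral_mult_right_zero)
    have "density \<alpha> (\<lambda>_. ennreal r) = density \<beta> (\<lambda>_. ennreal r)"
      by (rule Levy_uniqueness[OF rd[OF sa eA] rd[OF sb eB]]) (auto simp: chd[OF sa] chd[OF sb] ch)
    show ?thesis
    proof (rule measure_eqI[OF sa[folded sb]])
      fix A assume A: "A \<in> sets \<alpha>"
      have "ennreal r * emeasure \<alpha> A = ennreal r * emeasure \<beta> A"
        using emd[of A \<alpha>] emd[of A \<beta>] A sa sb \<open>density \<alpha> _ = _\<close> by simp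
      then show "emeasure \<alpha> A = emeasure \<beta> A" using r0 by (simp add: ennreal_mult_cancel_left)
    qed
  qed
qed



definition ft :: "(real \<Rightarrow> complex) \<Rightarrow> real \<Rightarrow> complex" where
  "ft h t = (LINT u|lborel. exp (\<i> * complex_of_real (u * t)) * h u)"

lemma finite_density_lborel:
  fixes q :: "real \<Rightarrow> real"
  assumes "integrable lborel q"
  shows "finite_measure (density lborel (\<lambda>u. ennreal (max 0 (q u))))"
proof (rule finite_measureI)
  have [measurable]: "q \<in> borel_measurable borel" using assms by auto
  have "emeasure (density lborel (\<lambda>u. ennreal (max 0 (q u)))) (space (density lborel (\<lambda>u. ennreal (max 0 (q u)))))
      = (\<integral>\<^sup>+u. ennreal (max 0 (q u)) \<partial>lborel)"
    by (subst emeasure_density) auto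
  also have "\<dots> \<le> (\<integral>\<^sup>+u. ennreal (norm (q u)) \<partial>lborel)"
    by (intro nn_integral_mono) auto
  also have "\<dots> < \<infinity>" using assms by (simp add: integrable_iff_bounded)
  finally show "emeasure (density lborel (\<lambda>u. ennreal (max 0 (q u)))) (space (density lborel (\<lambda>u. ennreal (max 0 (q u))))) \<noteq> \<infinity>"
    by simp
qed

lemma char_density_lborel:
  fixes q :: "real \<Rightarrow> real"
  assumes [measurable]: "q \<in> borel_measurable borel"
  shows "char (density lborel (\<lambda>u. ennreal (max 0 (q u)))) t =
         (LINT u|lborel. exp (\<i> * complex_of_real (u * t)) * complex_of_real (max 0 (q u)))"
  unfolding char_def
  by (subst integral_density) (auto simp: scaleR_conv_of_real mult.commute mult.left_commute)

lemma real_fourier_zero: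
  fixes q :: "real \<Rightarrow> real"
  assumes int: "integrable lborel q"
    and z: "\<And>t. (LINT u|lborel. exp (\<i> * complex_of_real (u * t)) * complex_of_real (q u)) = 0"
  shows "AE u in lborel. q u = 0"
proof -
  have [measurable]: "q \<in> borel_measurable borel" using int by auto
  have intm: "integrable lborel (\<lambda>u. q' u)" if "q' = (\<lambda>u. max 0 (q u)) \<or> q' = (\<lambda>u. max 0 (- q u))" for q'
    using that int by (auto intro: integrable_max integrable_minus)
  have ie: "integrable lborel (\<lambda>u. exp (\<i> * complex_of_real (u * t)) * complex_of_real (q' u))"
    if "integrable lborel q'" for q' :: "real \<Rightarrow> real" and t
  proof (rule Bochner_Integration.integrable_bound[OF integrable_norm[OF integrable_of_real[OF that]]])
    show "(\<lambda>u. exp (\<i> * complex_of_real (u * t)) * complex_of_real (q' u)) \<in> borel_measurable lborel"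
      using that by auto
    show "AE x in lborel. norm (exp (\<i> * complex_of_real (x * t)) * complex_of_real (q' x)) \<le> norm (norm (complex_of_real (q' x)))"
      by (auto simp: norm_mult norm_exp_i_times)
  qed
  let ?A = "density lborel (\<lambda>u. ennreal (max 0 (q u)))"
  let ?B = "density lborel (\<lambda>u. ennreal (max 0 (- q u)))"
  have "?A = ?B"
  proof (rule finite_measure_char_unique)
    show "finite_measure ?A" by (rule finite_density_lborel[OF int])
    show "finite_measure ?B" by (rule finite_density_lborel) (use int in auto)
    show "sets ?A = sets borel" "sets ?B = sets borel" by auto
    fix t
    have qe: "complex_of_real (q u) = complex_of_real (max 0 (q u)) - complex_of_real (max 0 (- q u))" for u
      by (simp add: max_def)
    have i1: "integrable lborel (\<lambda>u. exp (\<i> * complex_of_real (u * t)) * complex_of_real (max 0 (q u)))"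
      by (rule ie) (rule intm, simp)
    have i2: "integrable lborel (\<lambda>u. exp (\<i> * complex_of_real (u * t)) * complex_of_real (max 0 (- q u)))"
      by (rule ie) (rule intm, simp)
    have "0 = (LINT u|lborel. exp (\<i> * complex_of_real (u * t)) * complex_of_real (max 0 (q u))) -
              (LINT u|lborel. exp (\<i> * complex_of_real (u * t)) * complex_of_real (max 0 (- q u)))"
      using z[of t] unfolding qe right_diff_distrib
      by (subst Bochner_Integration.integral_diff[symmetric]) (rule i1, rule i2, simp)
    then show "char ?A t = char ?B t"
      by (subst (1 2) char_density_lborel) auto
  qed
  then have "AE u in lborel. ennreal (max 0 (q u)) = ennreal (max 0 (- q u))"
    by (subst (asm) sigma_finite_measure.density_unique_iff[OF sigma_finite_lborel]) auto
  then show ?thesis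
    by eventually_elim (auto simp: max_def split: if_splits)
qed

lemma ft_integrable:
  assumes "integrable lborel h"
  shows "integrable lborel (\<lambda>u. exp (\<i> * complex_of_real (u * t)) * h u)"
proof (rule Bochner_Integration.integrable_bound[OF integrable_norm[OF assms]])
  show "(\<lambda>u. exp (\<i> * complex_of_real (u * t)) * h u) \<in> borel_measurable lborel"
    using assms by auto
  show "AE x in lborel. norm (exp (\<i> * complex_of_real (x * t)) * h x) \<le> norm (norm (h x))"
    by (auto simp: norm_mult norm_exp_i_times)
qed

lemma ft_Re_zero:
  fixes h :: "real \<Rightarrow> complex"
  assumes int: "integrable lborel h" and z: "\<And>t. ft h t = 0"
  shows "(LINT u|lborel. exp (\<i> * complex_of_real (u * t)) * complex_of_real (Re (h u))) = 0"
proof -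
  have e: "exp (\<i> * complex_of_real (u * t)) * complex_of_real (Re (h u)) =
      (exp (\<i> * complex_of_real (u * t)) * h u + cnj (exp (\<i> * complex_of_real (u * - t)) * h u)) / 2" for u
  proof -
    have "cnj (exp (\<i> * complex_of_real (u * - t))) = exp (\<i> * complex_of_real (u * t))"
      by (simp add: exp_cnj)
    then have "cnj (exp (\<i> * complex_of_real (u * - t)) * h u) = exp (\<i> * complex_of_real (u * t)) * cnj (h u)"
      by simp
    then have "(exp (\<i> * complex_of_real (u * t)) * h u + cnj (exp (\<i> * complex_of_real (u * - t)) * h u)) / 2
       = exp (\<i> * complex_of_real (u * t)) * ((h u + cnj (h u)) / 2)"
      by (simp add: algebra_simps)
    also have "(h u + cnj (h u)) / 2 = complex_of_real (Re (h u))"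
      by (simp add: complex_add_cnj)
    finally show ?thesis by simp
  qed
  have "(LINT u|lborel. exp (\<i> * complex_of_real (u * t)) * complex_of_real (Re (h u)))
      = (ft h t + cnj (ft h (-t))) / 2"
  proof -
    have i1: "integrable lborel (\<lambda>u. exp (\<i> * complex_of_real (u * t)) * h u)"
      by (rule ft_integrable[OF int])
    have i2: "integrable lborel (\<lambda>u. cnj (exp (\<i> * complex_of_real (u * - t)) * h u))"
      by (rule integrable_cnj[OF ft_integrable[OF int]])
    show ?thesis
      unfolding e ft_def integral_divide_zero Bochner_Integration.integral_add[OF i1 i2] by (simp only: Bochner_Integration.integral_cnj)
  qed
  then show ?thesis using z by simp
qed

lemma ft_zero_imp_zero:
  fixes h :: "real \<Rightarrow> complex"
  assumes int: "integrable lborel h" and z: "\<And>t. ft h t = 0"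
  shows "AE u in lborel. h u = 0"
proof -
  have r: "AE u in lborel. Re (h u) = 0"
    by (rule real_fourier_zero[OF _ ft_Re_zero[OF int z]]) (use int in auto)
  have int2: "integrable lborel (\<lambda>u. - \<i> * h u)" using int by auto
  have z2: "ft (\<lambda>u. - \<i> * h u) t = 0" for t
    using z[of t] unfolding ft_def by (simp add: mult.left_commute)
  have i: "AE u in lborel. Re (- \<i> * h u) = 0"
    by (rule real_fourier_zero[OF _ ft_Re_zero[OF int2 z2]]) (use int int2 in auto)
  from r i show ?thesis by eventually_elim (simp add: complex_eq_iff)
qed



definition coef :: "(real \<Rightarrow> complex) \<Rightarrow> real \<Rightarrow> nat \<Rightarrow> complex" where
  "coef w x n = (\<i> ^ n / fact n) *
     (LINT u|lborel. complex_of_real (u ^ n) * exp (\<i> * complex_of_real (u * x)) * w u)"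

lemma ft_series:
  fixes w :: "real \<Rightarrow> complex" and C :: real
  assumes wm[measurable]: "w \<in> borel_measurable borel"
    and mom: "\<And>n. integrable lborel (\<lambda>u. \<bar>u\<bar> ^ n * cmod (w u))"
    and bnd: "\<And>n. (LINT u|lborel. \<bar>u\<bar> ^ n * cmod (w u)) \<le> C * fact n"
    and tx: "\<bar>t - x\<bar> < 1"
  shows "(\<lambda>n. coef w x n * complex_of_real ((t - x) ^ n)) sums ft w t"
proof -
  define f where "f n u = (\<i> ^ n / fact n * complex_of_real ((t - x) ^ n)) *
      (complex_of_real (u ^ n) * exp (\<i> * complex_of_real (u * x)) * w u)" for n u
  have nf: "norm (f n u) = \<bar>t - x\<bar> ^ n / fact n * (\<bar>u\<bar> ^ n * cmod (w u))" for n u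
    unfolding f_def by (simp add: norm_mult norm_power norm_divide norm_exp_i_times power_abs flip: of_real_diff)
  have fm[measurable]: "f n \<in> borel_measurable lborel" for n
    unfolding f_def by measurable
  have intf: "integrable lborel (f n)" for n
  proof (rule Bochner_Integration.integrable_bound[OF integrable_mult_right[OF mom[of n], of "\<bar>t - x\<bar> ^ n / fact n"]])
    show "f n \<in> borel_measurable lborel" by (rule fm)
    show "AE u in lborel. norm (f n u) \<le> norm (\<bar>t - x\<bar> ^ n / fact n * (\<bar>u\<bar> ^ n * cmod (w u)))"
      by (auto simp: nf)
  qed
  have fsum: "(\<lambda>n. f n u) sums (exp (\<i> * complex_of_real (u * t)) * w u)" for u
  proof -
    have e: "f n u = (exp (\<i> * complex_of_real (u * x)) * w u) *
        ((\<i> * complex_of_real (u * (t - x))) ^ n /\<^sub>R fact n)" for n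
    proof -
      have p: "(\<i> * complex_of_real (u * (t - x))) ^ n = \<i>^n * (complex_of_real (u^n) * complex_of_real ((t-x)^n))"
        by (simp only: power_mult_distrib of_real_mult of_real_power)
      show ?thesis unfolding f_def p scaleR_conv_of_real divide_inverse of_real_inverse of_real_fact by (simp only: mult_ac)
    qed
    have "(\<lambda>n. f n u) sums ((exp (\<i> * complex_of_real (u * x)) * w u) * exp (\<i> * complex_of_real (u * (t - x))))"
      unfolding e by (intro sums_mult exp_converges)
    also have "(exp (\<i> * complex_of_real (u * x)) * w u) * exp (\<i> * complex_of_real (u * (t - x)))
        = exp (\<i> * complex_of_real (u * t)) * w u"
    proof -
      have a: "\<i> * complex_of_real (u * x) + \<i> * complex_of_real (u * (t - x)) = \<i> * complex_of_real (u * t)"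
        by (simp add: algebra_simps)
      have b: "exp (\<i> * complex_of_real (u * x)) * exp (\<i> * complex_of_real (u * (t - x))) = exp (\<i> * complex_of_real (u * t))"
        unfolding exp_add[symmetric] a ..
      have c: "(exp (\<i> * complex_of_real (u * x)) * w u) * exp (\<i> * complex_of_real (u * (t - x)))
        = (exp (\<i> * complex_of_real (u * x)) * exp (\<i> * complex_of_real (u * (t - x)))) * w u"
        by (simp only: mult_ac)
      show ?thesis unfolding c b ..
    qed
    finally show ?thesis .
  qed
  have sn: "summable (\<lambda>n. norm (f n u))" for u
  proof -
    have "summable (\<lambda>n. \<bar>u * (t - x)\<bar> ^ n /\<^sub>R fact n * cmod (w u))"
      by (intro summable_mult2 summable_exp_generic)
    moreover have "(\<lambda>n. norm (f n u)) = (\<lambda>n. \<bar>u * (t - x)\<bar> ^ n /\<^sub>R fact n * cmod (w u))"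
      by (rule ext) (simp add: nf abs_mult power_mult_distrib divide_inverse mult_ac)
    ultimately show ?thesis by simp
  qed
  have si: "summable (\<lambda>n. LINT u|lborel. norm (f n u))"
  proof (rule summable_comparison_test)
    show "summable (\<lambda>n. C * \<bar>t - x\<bar> ^ n)"
      using tx by (intro summable_mult summable_geometric) simp
    show "\<exists>N. \<forall>n\<ge>N. norm (LINT u|lborel. norm (f n u)) \<le> C * \<bar>t - x\<bar> ^ n"
    proof (intro exI allI impI)
      fix n
      have "(LINT u|lborel. norm (f n u)) = \<bar>t - x\<bar> ^ n / fact n * (LINT u|lborel. \<bar>u\<bar> ^ n * cmod (w u))"
        unfolding nf by simp
      also have "\<dots> \<le> \<bar>t - x\<bar> ^ n / fact n * (C * fact n)"
        by (intro mult_left_mono bnd) auto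
      also have "\<dots> = C * \<bar>t - x\<bar> ^ n" by simp
      finally show "norm (LINT u|lborel. norm (f n u)) \<le> C * \<bar>t - x\<bar> ^ n"
        by (simp add: integral_nonneg_AE)
    qed
  qed
  have "(\<lambda>n. integral\<^sup>L lborel (f n)) sums (LINT u|lborel. (\<Sum>n. f n u))"
    by (rule sums_integral[OF intf _ si]) (auto intro: sn)
  moreover have "(\<lambda>u. \<Sum>n. f n u) = (\<lambda>u. exp (\<i> * complex_of_real (u * t)) * w u)"
    using fsum sums_unique by (auto intro!: ext simp: sums_iff)
  moreover have "integral\<^sup>L lborel (f n) = coef w x n * complex_of_real ((t - x) ^ n)" for n
    unfolding f_def coef_def by (simp add: integral_mult_right_zero)
  ultimately show ?thesis unfolding ft_def by simp
qed



lemma AE_ex_in_interval: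
  assumes ae: "AE t in lborel. P t" and ab: "a < (b::real)"
  shows "\<exists>t. a < t \<and> t < b \<and> P t"
proof (rule ccontr)
  assume nt: "\<not> ?thesis"
  from ae have "AE t in lborel. t \<notin> {a<..<b}" by eventually_elim (use nt in auto)
  then have "emeasure lborel {a<..<b} = 0"
    by (subst (asm) AE_iff_measurable[of "{a<..<b}"]) auto
  then show False using ab by simp
qed

lemma coef_bound:
  fixes w :: "real \<Rightarrow> complex" and C :: real
  assumes wm[measurable]: "w \<in> borel_measurable borel"
    and mom: "\<And>n. integrable lborel (\<lambda>u. \<bar>u\<bar> ^ n * cmod (w u))"
    and bnd: "\<And>n. (LINT u|lborel. \<bar>u\<bar> ^ n * cmod (w u)) \<le> C * fact n"
  shows "norm (coef w x n) \<le> C"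
proof -
  have "norm (LINT u|lborel. complex_of_real (u ^ n) * exp (\<i> * complex_of_real (u * x)) * w u)
      \<le> (LINT u|lborel. norm (complex_of_real (u ^ n) * exp (\<i> * complex_of_real (u * x)) * w u))"
    by (rule integral_norm_bound)
  also have "\<dots> = (LINT u|lborel. \<bar>u\<bar> ^ n * cmod (w u))"
    by (simp add: norm_mult norm_power norm_exp_i_times)
  also have "\<dots> \<le> C * fact n" by (rule bnd)
  finally show ?thesis
    unfolding coef_def by (simp add: norm_mult norm_divide norm_power field_simps)
qed

lemma ft_local_zero:
  fixes w :: "real \<Rightarrow> complex" and C :: real
  assumes wm[measurable]: "w \<in> borel_measurable borel"
    and mom: "\<And>n. integrable lborel (\<lambda>u. \<bar>u\<bar> ^ n * cmod (w u))"
    and bnd: "\<And>n. (LINT u|lborel. \<bar>u\<bar> ^ n * cmod (w u)) \<le> C * fact n"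
    and lim: "\<And>e. e > 0 \<Longrightarrow> \<exists>t. t \<noteq> y \<and> \<bar>t - y\<bar> < e \<and> \<bar>t - y\<bar> < 1 \<and> ft w t = 0"
    and s: "\<bar>s - y\<bar> < 1"
  shows "ft w s = 0"
proof -
  define F where "F = Abs_fps (coef w y)"
  have cb: "norm (coef w y n) \<le> C" for n by (rule coef_bound[OF wm mom bnd])
  have rad: "fps_conv_radius F \<ge> 1"
    unfolding fps_conv_radius_def F_def fps_nth_Abs_fps
  proof (rule conv_radius_geI_ex')
    fix r :: real assume r: "0 < r" "ereal r < 1"
    then have r1: "r < 1" by simp
    show "summable (\<lambda>n. coef w y n * complex_of_real r ^ n)"
    proof (rule summable_comparison_test)
      show "summable (\<lambda>n. C * r ^ n)" using r r1 by (intro summable_mult summable_geometric) simp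
      show "\<exists>N. \<forall>n\<ge>N. norm (coef w y n * complex_of_real r ^ n) \<le> C * r ^ n"
        using r cb by (auto simp: norm_mult norm_power intro!: mult_right_mono)
    qed
  qed
  define Pz where "Pz = (\<lambda>z. eval_fps F (z - complex_of_real y))"
  have hol: "Pz holomorphic_on ball (complex_of_real y) 1"
  proof -
    have "(eval_fps F \<circ> (\<lambda>z. z - complex_of_real y)) holomorphic_on ball (complex_of_real y) 1"
    proof (rule holomorphic_on_compose_gen)
      show "(\<lambda>z. z - complex_of_real y) holomorphic_on ball (complex_of_real y) 1"
        by (intro holomorphic_intros)
      show "eval_fps F holomorphic_on eball 0 (fps_conv_radius F)"
        by (intro holomorphic_on_eval_fps) auto
      show "(\<lambda>z. z - complex_of_real y) ` ball (complex_of_real y) 1 \<subseteq> eball 0 (fps_conv_radius F)"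
      proof
        fix z assume "z \<in> (\<lambda>z. z - complex_of_real y) ` ball (complex_of_real y) 1"
        then obtain v where v: "v \<in> ball (complex_of_real y) 1" "z = v - complex_of_real y" by auto
        then have "dist 0 z < 1" by (simp add: dist_norm norm_minus_commute)
        then have "ereal (dist 0 z) < 1" by simp
        then have "ereal (dist 0 z) < fps_conv_radius F" using rad by (rule order.strict_trans2)
        then show "z \<in> eball 0 (fps_conv_radius F)" by simp
      qed
    qed
    then show ?thesis unfolding Pz_def comp_def .
  qed
  have Preal: "Pz (complex_of_real t) = ft w t" if "\<bar>t - y\<bar> < 1" for t
  proof -
    have "(\<lambda>n. coef w y n * complex_of_real ((t - y) ^ n)) sums ft w t"
      by (rule ft_series[OF wm mom bnd that])
    then show ?thesis unfolding Pz_def eval_fps_def F_def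
      by (simp add: sums_iff)
  qed
  have "Pz (complex_of_real s) = 0"
  proof (rule analytic_continuation[OF hol])
    show "open (ball (complex_of_real y) 1)" "connected (ball (complex_of_real y) 1)" by auto
    let ?U = "complex_of_real ` {t. \<bar>t - y\<bar> < 1 \<and> ft w t = 0}"
    show "?U \<subseteq> ball (complex_of_real y) 1"
      by (auto simp: dist_norm norm_minus_commute simp flip: of_real_diff)
    show "complex_of_real y \<in> ball (complex_of_real y) 1" by simp
    show "complex_of_real s \<in> ball (complex_of_real y) 1"
      using s by (simp add: dist_norm norm_minus_commute flip: of_real_diff)
    show "z \<in> ?U \<Longrightarrow> Pz z = 0" for z using Preal by auto
    show "complex_of_real y islimpt ?U"
    proof (rule islimpt_approachable[THEN iffD2], intro allI impI)
      fix e :: real assume "e > 0"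
      then obtain t where t: "t \<noteq> y" "\<bar>t - y\<bar> < e" "\<bar>t - y\<bar> < 1" "ft w t = 0" using lim by blast
      show "\<exists>x'\<in>?U. x' \<noteq> complex_of_real y \<and> dist x' (complex_of_real y) < e"
        using t by (intro bexI[of _ "complex_of_real t"]) (auto simp: dist_norm simp flip: of_real_diff)
    qed
  qed
  then show ?thesis using Preal[OF s] by simp
qed



lemma ft_zero_all:
  fixes w :: "real \<Rightarrow> complex" and C :: real
  assumes wm[measurable]: "w \<in> borel_measurable borel"
    and mom: "\<And>n. integrable lborel (\<lambda>u. \<bar>u\<bar> ^ n * cmod (w u))"
    and bnd: "\<And>n. (LINT u|lborel. \<bar>u\<bar> ^ n * cmod (w u)) \<le> C * fact n"
    and z: "AE t in lborel. t \<ge> 0 \<longrightarrow> ft w t = 0"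
  shows "ft w s = 0"
proof -
  define good where "good y \<longleftrightarrow> (\<forall>s. \<bar>s - y\<bar> < 1 \<longrightarrow> ft w s = 0)" for y
  have g1: "good 1"
    unfolding good_def
  proof (intro allI impI)
    fix s :: real assume s: "\<bar>s - 1\<bar> < 1"
    show "ft w s = 0"
    proof (rule ft_local_zero[OF wm mom bnd _ s])
      fix e :: real assume e: "e > 0"
      obtain t where t: "1 < t" "t < 1 + min e 1" "t \<ge> 0 \<longrightarrow> ft w t = 0"
        using AE_ex_in_interval[OF z, of 1 "1 + min e 1"] e by auto
      then show "\<exists>t. t \<noteq> 1 \<and> \<bar>t - 1\<bar> < e \<and> \<bar>t - 1\<bar> < 1 \<and> ft w t = 0"
        by (intro exI[of _ t]) auto
    qed
  qed
  have gstep: "good y'" if gy: "good y" and yy: "\<bar>y' - y\<bar> \<le> 1/2" for y y'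
    unfolding good_def
  proof (intro allI impI)
    fix s :: real assume s: "\<bar>s - y'\<bar> < 1"
    show "ft w s = 0"
    proof (rule ft_local_zero[OF wm mom bnd _ s])
      fix e :: real assume e: "e > 0"
      define t where "t = y' + (if y' \<le> y then min e (1/2) / 2 else - (min e (1/2) / 2))"
      have "\<bar>t - y\<bar> < 1" using yy e unfolding t_def by (auto split: if_splits simp: abs_if min_def)
      then have "ft w t = 0" using gy unfolding good_def by blast
      moreover have "t \<noteq> y'" "\<bar>t - y'\<bar> < e" "\<bar>t - y'\<bar> < 1" using e unfolding t_def
        by (auto simp: min_def)
      ultimately show "\<exists>t. t \<noteq> y' \<and> \<bar>t - y'\<bar> < e \<and> \<bar>t - y'\<bar> < 1 \<and> ft w t = 0" by blast
    qed
  qed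
  have gp: "good (1 + real n / 2) \<and> good (1 - real n / 2)" for n
  proof (induction n)
    case 0 then show ?case using g1 by simp
  next
    case (Suc n)
    have a: "good (1 + real (Suc n) / 2)"
      by (rule gstep[of "1 + real n / 2"]) (use Suc in \<open>auto simp: field_simps\<close>)
    have b: "good (1 - real (Suc n) / 2)"
      by (rule gstep[of "1 - real n / 2"]) (use Suc in \<open>auto simp: field_simps\<close>)
    show ?case using a b by blast
  qed
  show ?thesis
  proof (cases "s \<ge> 1")
    case True
    define n where "n = nat \<lfloor>2 * (s - 1)\<rfloor>"
    have "real n = of_int \<lfloor>2 * (s - 1)\<rfloor>" using True unfolding n_def by simp
    then have "real n \<le> 2 * (s - 1)" "2 * (s - 1) < real n + 1"
      using of_int_floor_le[of "2 * (s - 1)"] real_of_int_floor_add_one_gt[of "2 * (s - 1)"] by linarith+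
    then have "\<bar>s - (1 + real n / 2)\<bar> < 1" by simp
    then show ?thesis using gp[of n] unfolding good_def by blast
  next
    case False
    define n where "n = nat \<lfloor>2 * (1 - s)\<rfloor>"
    have "real n = of_int \<lfloor>2 * (1 - s)\<rfloor>" using False unfolding n_def by simp
    then have "real n \<le> 2 * (1 - s)" "2 * (1 - s) < real n + 1"
      using of_int_floor_le[of "2 * (1 - s)"] real_of_int_floor_add_one_gt[of "2 * (1 - s)"] by linarith+
    then have "\<bar>s - (1 - real n / 2)\<bar> < 1" by simp
    then show ?thesis using gp[of n] unfolding good_def by blast
  qed
qed



lemma ft_measurable[measurable]:
  assumes [measurable]: "w \<in> borel_measurable borel"
  shows "ft w \<in> borel_measurable borel"
proof -
  have "(\<lambda>x. LINT u|lborel. exp (\<i> * complex_of_real (u * x)) * w u) \<in> borel_measurable borel"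
    by (rule sigma_finite_measure.borel_measurable_lebesgue_integral[OF sigma_finite_lborel]) measurable
  then show ?thesis unfolding ft_def[abs_def] .
qed

lemma char_measurable_fin:
  assumes fm: "finite_measure M" and sM[measurable_cong]: "sets M = sets borel"
  shows "char M \<in> borel_measurable borel"
proof -
  interpret finite_measure M by fact
  have "(\<lambda>x. \<integral>s. exp (\<i> * complex_of_real (x * s)) \<partial>M) \<in> borel_measurable borel"
    by (rule borel_measurable_lebesgue_integral) measurable
  then show ?thesis unfolding char_def[abs_def] .
qed

lemma char_norm_fin:
  assumes fm: "finite_measure M" and sM: "sets M = sets borel"
  shows "norm (char M t) \<le> measure M UNIV"
proof -
  interpret finite_measure M by fact
  have "norm (char M t) \<le> (\<integral>s. norm (exp (\<i> * complex_of_real (t * s))) \<partial>M)"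
    unfolding char_def by (rule integral_norm_bound)
  also have "\<dots> = measure M UNIV" using space_borel_sets[OF sM]
    by (simp add: norm_exp_i_times)
  finally show ?thesis .
qed

lemma isCont_char_fin:
  assumes fm: "finite_measure M" and sM[measurable_cong]: "sets M = sets borel"
  shows "isCont (char M) t"
proof -
  interpret finite_measure M by fact
  show ?thesis
    unfolding continuous_at_sequentially
  proof safe
    fix X assume X: "X \<longlonglongrightarrow> t"
    show "(char M \<circ> X) \<longlonglongrightarrow> char M t"
      unfolding comp_def char_def
      by (rule integral_dominated_convergence[where w="\<lambda>_. 1"]) (auto intro!: tendsto_intros X)
  qed
qed

lemma fubini_char:
  fixes k :: "real \<Rightarrow> complex"
  assumes km[measurable]: "k \<in> borel_measurable borel" and ki: "integrable lborel k"
    and fm: "finite_measure M" and sM[measurable_cong]: "sets M = sets borel"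
  shows "(LINT u|lborel. exp (\<i> * complex_of_real (u * t)) * (k u * char M u))
       = (\<integral>s. ft k (t + s) \<partial>M)"
proof -
  interpret M: finite_measure M by fact
  interpret M: sigma_finite_measure M by (rule M.sigma_finite_measure)
  interpret pair_sigma_finite lborel M by unfold_locales
  have spM: "space M = UNIV" by (rule space_borel_sets[OF sM])
  define g where "g u s = exp (\<i> * complex_of_real (u * (t + s))) * k u" for u s
  have gm[measurable]: "case_prod g \<in> borel_measurable (lborel \<Otimes>\<^sub>M M)"
    unfolding g_def by measurable
  have ng: "norm (g u s) = norm (k u)" for u s
    unfolding g_def by (simp add: norm_mult norm_exp_i_times)
  have gi: "integrable (lborel \<Otimes>\<^sub>M M) (case_prod g)"
  proof (rule Fubini_integrable)
    show "case_prod g \<in> borel_measurable (lborel \<Otimes>\<^sub>M M)" by (rule gm)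
    have "(\<lambda>x. \<integral>y. norm (case_prod g (x, y)) \<partial>M) = (\<lambda>x. norm (k x) * measure M UNIV)"
      using spM by (simp add: ng mult.commute)
    then show "integrable lborel (\<lambda>x. \<integral>y. norm (case_prod g (x, y)) \<partial>M)"
      using ki by simp
    show "AE x in lborel. integrable M (\<lambda>y. case_prod g (x, y))"
    proof (rule AE_I2)
      fix x
      show "integrable M (\<lambda>y. case_prod g (x, y))"
        by (rule M.integrable_const_bound[where B="norm (k x)"]) (auto simp: ng)
    qed
  qed
  have "(\<integral>s. (LINT u|lborel. g u s) \<partial>M) = (LINT u|lborel. (\<integral>s. g u s \<partial>M))"
    by (rule Fubini_integral[OF gi])
  moreover have "(LINT u|lborel. g u s) = ft k (t + s)" for s
    unfolding g_def ft_def ..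
  moreover have "(\<integral>s. g u s \<partial>M) = exp (\<i> * complex_of_real (u * t)) * (k u * char M u)" for u
  proof -
    have "g u s = (exp (\<i> * complex_of_real (u * t)) * k u) * exp (\<i> * complex_of_real (u * s))" for s
    proof -
      have "\<i> * complex_of_real (u * (t + s)) = \<i> * complex_of_real (u * t) + \<i> * complex_of_real (u * s)"
        by (simp add: algebra_simps)
      then show ?thesis unfolding g_def by (simp add: exp_add mult_ac)
    qed
    then have "(\<integral>s. g u s \<partial>M) = (exp (\<i> * complex_of_real (u * t)) * k u) * char M u"
      unfolding char_def by (simp add: mult.commute[of u])
    then show ?thesis by (simp add: mult_ac)
  qed
  ultimately show ?thesis by simp
qed



lemma core_uniqueness:
  fixes k :: "real \<Rightarrow> complex" and f :: "real \<Rightarrow> real" and C B :: real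
    and \<alpha> \<beta> :: "real measure"
  assumes km[measurable]: "k \<in> borel_measurable borel"
    and mom: "\<And>n. integrable lborel (\<lambda>u. \<bar>u\<bar> ^ n * cmod (k u))"
    and bnd: "\<And>n. (LINT u|lborel. \<bar>u\<bar> ^ n * cmod (k u)) \<le> C * fact n"
    and nonvanish: "\<And>a b. a < b \<Longrightarrow> \<not> (AE u in lborel. u \<in> {a<..<b} \<longrightarrow> k u = 0)"
    and fm[measurable]: "f \<in> borel_measurable borel"
    and frep: "\<And>t. t \<ge> 0 \<Longrightarrow> complex_of_real (f t) = ft k t"
    and fa: "finite_measure \<alpha>" and sa[measurable_cong]: "sets \<alpha> = sets borel"
    and fb: "finite_measure \<beta>" and sb[measurable_cong]: "sets \<beta> = sets borel"
    and na: "emeasure \<alpha> {..<0} = 0" and nb: "emeasure \<beta> {..<0} = 0"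
    and H: "AE t in lborel. t \<ge> 0 \<longrightarrow> (\<integral>s. f (t + s) \<partial>\<alpha>) = (\<integral>s. f (t + s) \<partial>\<beta>)"
  shows "\<alpha> = \<beta>"
proof -
  interpret A: finite_measure \<alpha> by fact
  interpret B: finite_measure \<beta> by fact
  have spa: "space \<alpha> = UNIV" and spb: "space \<beta> = UNIV" using sa sb space_borel_sets by auto
  have ki: "integrable lborel k"
    using mom[of 0] km by (simp add: integrable_norm_iff)
  define a where "a = measure \<alpha> UNIV"
  define b where "b = measure \<beta> UNIV"
  have ab0: "a \<ge> 0" "b \<ge> 0" unfolding a_def b_def by auto
  define w where "w u = k u * (char \<alpha> u - char \<beta> u)" for u
  have cam[measurable]: "char \<alpha> \<in> borel_measurable borel" by (rule char_measurable_fin[OF fa sa])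
  have cbm[measurable]: "char \<beta> \<in> borel_measurable borel" by (rule char_measurable_fin[OF fb sb])
  have wm[measurable]: "w \<in> borel_measurable borel" unfolding w_def by measurable
  have nw: "cmod (w u) \<le> (a + b) * cmod (k u)" for u
  proof -
    have "cmod (char \<alpha> u - char \<beta> u) \<le> cmod (char \<alpha> u) + cmod (char \<beta> u)" by (rule norm_triangle_ineq4)
    also have "\<dots> \<le> a + b" unfolding a_def b_def
      by (intro add_mono char_norm_fin fa fb sa sb)
    finally show ?thesis unfolding w_def norm_mult by (metis mult.commute mult_left_mono norm_ge_zero)
  qed
  have momw: "integrable lborel (\<lambda>u. \<bar>u\<bar> ^ n * cmod (w u))" for n
  proof (rule Bochner_Integration.integrable_bound[OF integrable_mult_right[OF mom[of n], of "a + b"]])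
    show "(\<lambda>u. \<bar>u\<bar> ^ n * cmod (w u)) \<in> borel_measurable lborel" by measurable
    show "AE u in lborel. norm (\<bar>u\<bar> ^ n * cmod (w u)) \<le> norm ((a + b) * (\<bar>u\<bar> ^ n * cmod (k u)))"
    proof (rule AE_I2)
      fix u
      have "\<bar>u\<bar> ^ n * cmod (w u) \<le> \<bar>u\<bar> ^ n * ((a + b) * cmod (k u))"
        by (rule mult_left_mono[OF nw]) simp
      then show "norm (\<bar>u\<bar> ^ n * cmod (w u)) \<le> norm ((a + b) * (\<bar>u\<bar> ^ n * cmod (k u)))"
        using ab0 by (simp add: abs_mult mult_ac)
    qed
  qed
  have bndw: "(LINT u|lborel. \<bar>u\<bar> ^ n * cmod (w u)) \<le> ((a + b) * C) * fact n" for n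
  proof -
    have "(LINT u|lborel. \<bar>u\<bar> ^ n * cmod (w u)) \<le> (LINT u|lborel. (a + b) * (\<bar>u\<bar> ^ n * cmod (k u)))"
    proof (intro integral_mono momw integrable_mult_right mom)
      fix u
      have "\<bar>u\<bar> ^ n * cmod (w u) \<le> \<bar>u\<bar> ^ n * ((a + b) * cmod (k u))"
        by (rule mult_left_mono[OF nw]) simp
      then show "\<bar>u\<bar> ^ n * cmod (w u) \<le> (a + b) * (\<bar>u\<bar> ^ n * cmod (k u))"
        by (simp add: mult_ac)
    qed
    also have "\<dots> = (a + b) * (LINT u|lborel. \<bar>u\<bar> ^ n * cmod (k u))" by simp
    also have "\<dots> \<le> (a + b) * (C * fact n)" using ab0 by (intro mult_left_mono bnd) auto
    finally show ?thesis by (simp add: mult_ac)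
  qed
  have intc: "integrable lborel (\<lambda>u. exp (\<i> * complex_of_real (u * t)) * (k u * char M u))"
    if "finite_measure M" "sets M = sets borel" for M t
  proof (rule Bochner_Integration.integrable_bound[OF integrable_mult_right[OF integrable_norm[OF ki], of "measure M UNIV"]])
    show "(\<lambda>u. exp (\<i> * complex_of_real (u * t)) * (k u * char M u)) \<in> borel_measurable lborel"
      using char_measurable_fin[OF that] by measurable
    show "AE u in lborel. norm (exp (\<i> * complex_of_real (u * t)) * (k u * char M u)) \<le> norm (measure M UNIV * norm (k u))"
      using char_norm_fin[OF that]
      by (auto simp: norm_mult norm_exp_i_times mult.commute intro!: mult_left_mono)
  qed
  have ftw: "ft w t = (\<integral>s. ft k (t + s) \<partial>\<alpha>) - (\<integral>s. ft k (t + s) \<partial>\<beta>)" for t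
  proof -
    have "ft w t = (LINT u|lborel. exp (\<i> * complex_of_real (u * t)) * (k u * char \<alpha> u) -
                                    exp (\<i> * complex_of_real (u * t)) * (k u * char \<beta> u))"
      unfolding ft_def w_def by (simp add: algebra_simps)
    also have "\<dots> = (LINT u|lborel. exp (\<i> * complex_of_real (u * t)) * (k u * char \<alpha> u)) -
                    (LINT u|lborel. exp (\<i> * complex_of_real (u * t)) * (k u * char \<beta> u))"
      by (rule Bochner_Integration.integral_diff[OF intc[OF fa sa] intc[OF fb sb]])
    also have "\<dots> = (\<integral>s. ft k (t + s) \<partial>\<alpha>) - (\<integral>s. ft k (t + s) \<partial>\<beta>)"
      by (simp only: fubini_char[OF km ki fa sa] fubini_char[OF km ki fb sb])
    finally show ?thesis .
  qed
  have aeM: "AE s in M. s \<ge> 0" if "sets M = sets borel" "emeasure M {..<0} = 0" for M :: "real measure"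
  proof -
    have "{x \<in> space M. \<not> 0 \<le> x} = {..<0}" using space_borel_sets[OF that(1)] by auto
    then show ?thesis using that by (subst AE_iff_measurable[of "{..<0}"]) auto
  qed
  have ftk: "(\<integral>s. ft k (t + s) \<partial>M) = complex_of_real (\<integral>s. f (t + s) \<partial>M)"
    if "t \<ge> 0" "sets M = sets borel" "emeasure M {..<0} = 0" for M :: "real measure" and t
  proof -
    have sM[measurable_cong]: "sets M = sets borel" by (rule that(2))
    have "(\<integral>s. ft k (t + s) \<partial>M) = (\<integral>s. complex_of_real (f (t + s)) \<partial>M)"
    proof (rule integral_cong_AE)
      show "(\<lambda>s. ft k (t + s)) \<in> borel_measurable M" by measurable
      show "(\<lambda>s. complex_of_real (f (t + s))) \<in> borel_measurable M" by measurable
      show "AE s in M. ft k (t + s) = complex_of_real (f (t + s))"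
        using aeM[OF that(2,3)] by eventually_elim (use that(1) frep in auto)
    qed
    then show ?thesis by simp
  qed
  have zae: "AE t in lborel. t \<ge> 0 \<longrightarrow> ft w t = 0"
    using H by eventually_elim (auto simp: ftw ftk sa sb na nb)
  have zall: "ft w t = 0" for t by (rule ft_zero_all[OF wm momw bndw zae])
  have wi: "integrable lborel w"
    using momw[of 0] wm by (simp add: integrable_norm_iff)
  have w0: "AE u in lborel. w u = 0" by (rule ft_zero_imp_zero[OF wi zall])
  have dense: "\<exists>u. u0 - e < u \<and> u < u0 + e \<and> char \<alpha> u = char \<beta> u" if "e > 0" for u0 e
  proof (rule ccontr)
    assume nt: "\<not> ?thesis"
    from w0 have "AE u in lborel. u \<in> {u0 - e<..<u0 + e} \<longrightarrow> k u = 0"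
      by eventually_elim (use nt in \<open>auto simp: w_def\<close>)
    then show False using nonvanish[of "u0 - e" "u0 + e"] that by simp
  qed
  have ceq: "char \<alpha> u0 = char \<beta> u0" for u0
  proof (rule ccontr)
    assume ne: "char \<alpha> u0 \<noteq> char \<beta> u0"
    define e where "e = norm (char \<alpha> u0 - char \<beta> u0) / 2"
    have e0: "e > 0" using ne unfolding e_def by simp
    have ca: "isCont (char \<alpha>) u0" by (rule isCont_char_fin[OF fa sa])
    have cb: "isCont (char \<beta>) u0" by (rule isCont_char_fin[OF fb sb])
    obtain d1 where d1: "d1 > 0" "\<And>u. norm (u - u0) < d1 \<Longrightarrow> norm (char \<alpha> u - char \<alpha> u0) < e"
      using ca e0 unfolding isCont_def LIM_eq by (metis dist_norm dist_self order_less_irrefl)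
    obtain d2 where d2: "d2 > 0" "\<And>u. norm (u - u0) < d2 \<Longrightarrow> norm (char \<beta> u - char \<beta> u0) < e"
      using cb e0 unfolding isCont_def LIM_eq by (metis dist_norm dist_self order_less_irrefl)
    obtain u where u: "u0 - min d1 d2 < u" "u < u0 + min d1 d2" "char \<alpha> u = char \<beta> u"
      using dense[of "min d1 d2" u0] d1 d2 by auto
    have "norm (u - u0) < d1" "norm (u - u0) < d2" using u by auto
    then have "norm (char \<alpha> u - char \<alpha> u0) < e" "norm (char \<beta> u - char \<beta> u0) < e"
      using d1 d2 by auto
    then have "norm (char \<alpha> u0 - char \<beta> u0) < 2 * e"
      using u(3) norm_triangle_lt[of "char \<alpha> u0 - char \<alpha> u" "char \<beta> u - char \<beta> u0" "2 * e"]
      by (simp add: norm_minus_commute)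
    then show False unfolding e_def by simp
  qed
  show ?thesis by (rule finite_measure_char_unique[OF fa fb sa sb ceq])
qed



lemma agree_nn_integral:
  fixes M N :: "real measure"
  assumes sM[measurable_cong]: "sets M = sets borel" and sN[measurable_cong]: "sets N = sets borel"
    and ag: "agree_on_nonneg M N"
    and G[measurable]: "G \<in> borel_measurable borel"
  shows "(\<integral>\<^sup>+x. indicator {0..} x * G x \<partial>M) = (\<integral>\<^sup>+x. indicator {0..} x * G x \<partial>N)"
proof -
  have "density M (indicator {0..}) = density N (indicator {0..})"
  proof (rule measure_eqI)
    show "sets (density M (indicator {0..})) = sets (density N (indicator {0..}))" using sM sN by simp
    fix A assume "A \<in> sets (density M (indicator {0..}))"
    then have A[measurable]: "A \<in> sets borel" using sM by simp
    have "emeasure (density M (indicator {0..})) A = emeasure M ({0..} \<inter> A)"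
      by (simp add: emeasure_density indicator_inter_arith[symmetric] sM)
    also have "\<dots> = emeasure N ({0..} \<inter> A)"
      using ag unfolding agree_on_nonneg_def by auto
    also have "\<dots> = emeasure (density N (indicator {0..})) A"
      by (simp add: emeasure_density indicator_inter_arith[symmetric] sN)
    finally show "emeasure (density M (indicator {0..})) A = emeasure (density N (indicator {0..})) A" .
  qed
  then have "integral\<^sup>N (density M (indicator {0..})) G = integral\<^sup>N (density N (indicator {0..})) G"
    by simp
  then show ?thesis by (simp add: nn_integral_density)
qed



lemma conv_decomp:
  fixes M :: "real measure" and f :: "real \<Rightarrow> real" and A :: "real set"
  assumes Mp: "prob_space M" and sM[measurable_cong]: "sets M = sets borel"
    and fm[measurable]: "f \<in> borel_measurable borel"
    and Dp: "prob_space (density lborel f)"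
    and ag: "agree_on_nonneg M (density lborel f)"
    and A[measurable]: "A \<in> sets borel" and AP: "A \<subseteq> {0..}"
  shows "emeasure (M \<star> M) A =
    (\<integral>\<^sup>+x. indicator {0..} x * (\<integral>\<^sup>+y. indicator {0..} y * indicator A (x + y) \<partial>density lborel f) \<partial>density lborel f)
    + 2 * (\<integral>\<^sup>+t. indicator A t * (\<integral>\<^sup>+y. indicator {..<0} y * ennreal (f (t - y)) \<partial>M) \<partial>lborel)"
proof -
  let ?D = "density lborel f"
  have sD[measurable_cong]: "sets ?D = sets borel" by simp
  interpret M: prob_space M by fact
  interpret D: prob_space ?D by fact
  interpret pair_sigma_finite lborel M by unfold_locales
  have spM: "space M = UNIV" by (rule space_borel_sets[OF sM])
  have finM: "finite_measure M" using Mp by (simp add: prob_space_def)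
  have conv: "emeasure (M \<star> M) A = (\<integral>\<^sup>+x. \<integral>\<^sup>+y. indicator A (x + y) \<partial>M \<partial>M)"
    by (rule convolution_emeasure'[OF A finM finM sM sM])
  define p where "p x = (\<integral>\<^sup>+y. indicator {0..} y * indicator A (x + y) \<partial>?D)" for x
  define q where "q x = (\<integral>\<^sup>+y. indicator {..<0} y * indicator A (x + y) \<partial>M)" for x
  define R where "R y = (\<integral>\<^sup>+x. ennreal (f x) * (indicator {0..} x * indicator A (x + y)) \<partial>lborel)" for y
  define Psi where "Psi t = (\<integral>\<^sup>+y. indicator {..<0} y * ennreal (f (t - y)) \<partial>M)" for t
  define K where "K = (\<integral>\<^sup>+x. indicator {0..} x * p x \<partial>?D)"
  have pm[measurable]: "p \<in> borel_measurable borel" unfolding p_def by measurable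
  have qm[measurable]: "q \<in> borel_measurable borel" unfolding q_def by measurable
  have Rm[measurable]: "R \<in> borel_measurable borel" unfolding R_def by measurable
  have phi: "(\<integral>\<^sup>+y. indicator A (x + y) \<partial>M) = p x + q x" for x
  proof -
    have "(\<integral>\<^sup>+y. indicator A (x + y) \<partial>M) =
        (\<integral>\<^sup>+y. indicator {0..} y * indicator A (x + y) + indicator {..<0} y * indicator A (x + y) \<partial>M)"
      by (intro nn_integral_cong) (auto split: split_indicator)
    also have "\<dots> = (\<integral>\<^sup>+y. indicator {0..} y * indicator A (x + y) \<partial>M) + q x"
      unfolding q_def by (rule nn_integral_add) auto
    also have "(\<integral>\<^sup>+y. indicator {0..} y * indicator A (x + y) \<partial>M) = p x"
      unfolding p_def by (rule agree_nn_integral[OF sM sD ag]) measurable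
    finally show ?thesis .
  qed
  have q0: "indicator {..<0} x * q x = 0" for x
  proof (cases "x < 0")
    case True
    have "q x = (\<integral>\<^sup>+y. 0 \<partial>M)" unfolding q_def
      by (intro nn_integral_cong) (use True AP in \<open>auto split: split_indicator\<close>)
    then show ?thesis by simp
  qed simp
  have "emeasure (M \<star> M) A = (\<integral>\<^sup>+x. (indicator {0..} x * p x + indicator {0..} x * q x)
       + (indicator {..<0} x * p x + indicator {..<0} x * q x) \<partial>M)"
    unfolding conv phi by (intro nn_integral_cong) (auto split: split_indicator)
  also have "\<dots> = (\<integral>\<^sup>+x. indicator {0..} x * p x + indicator {0..} x * q x \<partial>M)
       + (\<integral>\<^sup>+x. indicator {..<0} x * p x + indicator {..<0} x * q x \<partial>M)"
    by (rule nn_integral_add) auto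
  also have "(\<integral>\<^sup>+x. indicator {0..} x * p x + indicator {0..} x * q x \<partial>M)
      = (\<integral>\<^sup>+x. indicator {0..} x * p x \<partial>M) + (\<integral>\<^sup>+x. indicator {0..} x * q x \<partial>M)"
    by (rule nn_integral_add) auto
  also have "(\<integral>\<^sup>+x. indicator {..<0} x * p x + indicator {..<0} x * q x \<partial>M)
      = (\<integral>\<^sup>+x. indicator {..<0} x * p x \<partial>M)"
    by (simp add: q0)
  also have "(\<integral>\<^sup>+x. indicator {0..} x * p x \<partial>M) = K"
    unfolding K_def by (rule agree_nn_integral[OF sM sD ag pm])
  also have "(\<integral>\<^sup>+x. indicator {0..} x * q x \<partial>M) = (\<integral>\<^sup>+y. indicator {..<0} y * R y \<partial>M)"
  proof -
    have "(\<integral>\<^sup>+x. indicator {0..} x * q x \<partial>M) = (\<integral>\<^sup>+x. indicator {0..} x * q x \<partial>?D)"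
      by (rule agree_nn_integral[OF sM sD ag qm])
    also have "\<dots> = (\<integral>\<^sup>+x. ennreal (f x) * (indicator {0..} x * q x) \<partial>lborel)"
      by (rule nn_integral_density) auto
    also have "\<dots> = (\<integral>\<^sup>+x. \<integral>\<^sup>+y. ennreal (f x) * (indicator {0..} x * indicator A (x + y)) * indicator {..<0} y \<partial>M \<partial>lborel)"
      unfolding q_def
      by (intro nn_integral_cong) (simp add: nn_integral_cmult[symmetric] mult_ac)
    also have "\<dots> = (\<integral>\<^sup>+y. \<integral>\<^sup>+x. ennreal (f x) * (indicator {0..} x * indicator A (x + y)) * indicator {..<0} y \<partial>lborel \<partial>M)"
      by (rule Fubini'[symmetric]) measurable
    also have "\<dots> = (\<integral>\<^sup>+y. indicator {..<0} y * R y \<partial>M)"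
      unfolding R_def
    proof (intro nn_integral_cong)
      fix y
      show "(\<integral>\<^sup>+x. ennreal (f x) * (indicator {0..} x * indicator A (x + y)) * indicator {..<0} y \<partial>lborel) =
          indicator {..<0} y * (\<integral>\<^sup>+x. ennreal (f x) * (indicator {0..} x * indicator A (x + y)) \<partial>lborel)"
        by (subst nn_integral_cmult[symmetric]) (measurable, simp add: mult_ac)
    qed
    finally show ?thesis .
  qed
  also have "(\<integral>\<^sup>+x. indicator {..<0} x * p x \<partial>M) = (\<integral>\<^sup>+y. indicator {..<0} y * R y \<partial>M)"
  proof -
    have "p x = R x" for x
      unfolding p_def R_def by (subst nn_integral_density) (auto simp: add.commute)
    then show ?thesis by simp
  qed
  also have "(\<integral>\<^sup>+y. indicator {..<0} y * R y \<partial>M) = (\<integral>\<^sup>+t. indicator A t * Psi t \<partial>lborel)"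
  proof -
    have Ry: "indicator {..<0} y * R y = (\<integral>\<^sup>+t. indicator A t * (indicator {..<0} y * ennreal (f (t - y))) \<partial>lborel)" for y
    proof -
      have "R y = (\<integral>\<^sup>+t. ennreal (f (t - y)) * (indicator {0..} (t - y) * indicator A t) \<partial>lborel)"
        unfolding R_def
        by (subst nn_integral_real_affine[where c=1 and t="- y"]) auto
      then have "indicator {..<0} y * R y =
          (\<integral>\<^sup>+t. indicator {..<0} y * (ennreal (f (t - y)) * (indicator {0..} (t - y) * indicator A t)) \<partial>lborel)"
        by (simp add: nn_integral_cmult)
      also have "\<dots> = (\<integral>\<^sup>+t. indicator A t * (indicator {..<0} y * ennreal (f (t - y))) \<partial>lborel)"
        by (intro nn_integral_cong) (use AP in \<open>auto split: split_indicator\<close>)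
      finally show ?thesis .
    qed
    have "(\<integral>\<^sup>+y. indicator {..<0} y * R y \<partial>M) =
        (\<integral>\<^sup>+y. \<integral>\<^sup>+t. indicator A t * (indicator {..<0} y * ennreal (f (t - y))) \<partial>lborel \<partial>M)"
      by (simp only: Ry)
    also have "\<dots> = (\<integral>\<^sup>+t. \<integral>\<^sup>+y. indicator A t * (indicator {..<0} y * ennreal (f (t - y))) \<partial>M \<partial>lborel)"
      by (rule Fubini') measurable
    also have "\<dots> = (\<integral>\<^sup>+t. indicator A t * Psi t \<partial>lborel)"
      unfolding Psi_def by (intro nn_integral_cong) (simp add: nn_integral_cmult)
    finally show ?thesis .
  qed
  finally show ?thesis unfolding K_def p_def Psi_def
    by (simp add: mult_2 add.assoc)
qed



lemma neg_part_facts: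
  fixes M :: "real measure" and f :: "real \<Rightarrow> real"
  assumes Mp: "prob_space M" and sM[measurable_cong]: "sets M = sets borel"
    and fm[measurable]: "f \<in> borel_measurable borel" and fnn: "\<And>x. f x \<ge> 0"
  defines "\<alpha> \<equiv> distr (density M (indicator {..<0})) borel uminus"
  shows "finite_measure \<alpha>" "sets \<alpha> = sets borel" "emeasure \<alpha> {..<0} = 0"
    and "\<And>t. (\<integral>s. f (t + s) \<partial>\<alpha>) = enn2real (\<integral>\<^sup>+y. indicator {..<0} y * ennreal (f (t - y)) \<partial>M)"
    and "distr \<alpha> borel uminus = density M (indicator {..<0})"
proof -
  interpret M: prob_space M by fact
  have spM: "space M = UNIV" by (rule space_borel_sets[OF sM])
  let ?A = "density M (indicator {..<0})"
  have sA[measurable_cong]: "sets ?A = sets borel" using sM by simp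
  have fA: "finite_measure ?A"
  proof (rule finite_measureI)
    have "emeasure ?A (space ?A) = emeasure M ({..<0} \<inter> space M)"
      by (subst emeasure_density) (auto simp: nn_integral_indicator[symmetric] indicator_inter_arith[symmetric] simp del: nn_integral_indicator)
    also have "\<dots> \<le> emeasure M (space M)" by (rule emeasure_space)
    also have "\<dots> < \<infinity>" by (simp add: M.emeasure_space_1)
    finally show "emeasure ?A (space ?A) \<noteq> \<infinity>" by simp
  qed
  show "finite_measure \<alpha>" unfolding \<alpha>_def
    by (rule finite_measure.finite_measure_distr[OF fA]) simp
  show sa: "sets \<alpha> = sets borel" unfolding \<alpha>_def by simp
  show "emeasure \<alpha> {..<0} = 0"
  proof -
    have "emeasure \<alpha> {..<0} = emeasure ?A (uminus -` {..<0} \<inter> space ?A)"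
      unfolding \<alpha>_def by (rule emeasure_distr) auto
    also have "\<dots> = (\<integral>\<^sup>+x. indicator {..<0} x * indicator (uminus -` {..<0} \<inter> space ?A) x \<partial>M)"
      by (subst emeasure_density) auto
    also have "\<dots> = (\<integral>\<^sup>+x. 0 \<partial>M)"
      by (intro nn_integral_cong) (auto split: split_indicator)
    finally show ?thesis by simp
  qed
  show "(\<integral>s. f (t + s) \<partial>\<alpha>) = enn2real (\<integral>\<^sup>+y. indicator {..<0} y * ennreal (f (t - y)) \<partial>M)" for t
  proof -
    have "(\<integral>s. f (t + s) \<partial>\<alpha>) = (\<integral>y. f (t + - y) \<partial>?A)"
      unfolding \<alpha>_def by (rule integral_distr) auto
    also have "?A = density M (\<lambda>y. ennreal (indicator {..<0} y))"
      by (simp add: ennreal_indicator)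
    also have "(\<integral>y. f (t + - y) \<partial>density M (\<lambda>y. ennreal (indicator {..<0} y))) =
        (\<integral>y. indicator {..<0} y * f (t - y) \<partial>M)"
      by (subst integral_density) auto
    also have "\<dots> = enn2real (\<integral>\<^sup>+y. ennreal (indicator {..<0} y * f (t - y)) \<partial>M)"
      by (rule integral_eq_nn_integral) (auto simp: fnn)
    also have "(\<integral>\<^sup>+y. ennreal (indicator {..<0} y * f (t - y)) \<partial>M) =
        (\<integral>\<^sup>+y. indicator {..<0} y * ennreal (f (t - y)) \<partial>M)"
      by (intro nn_integral_cong) (auto split: split_indicator)
    finally show ?thesis .
  qed
  show "distr \<alpha> borel uminus = ?A"
  proof -
    have "distr \<alpha> borel uminus = distr ?A borel (uminus \<circ> uminus)"
      unfolding \<alpha>_def by (rule distr_distr) auto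
    also have "(uminus \<circ> uminus) = (\<lambda>x::real. x)" by auto
    also have "distr ?A borel (\<lambda>x. x) = ?A" by (rule distr_id2) (simp add: sM)
    finally show ?thesis .
  qed
qed



lemma part3:
  fixes k :: "real \<Rightarrow> complex" and f :: "real \<Rightarrow> real" and C :: real and \<mu>1 :: "real measure"
  assumes km[measurable]: "k \<in> borel_measurable borel"
    and mom: "\<And>n. integrable lborel (\<lambda>u. \<bar>u\<bar> ^ n * cmod (k u))"
    and bnd: "\<And>n. (LINT u|lborel. \<bar>u\<bar> ^ n * cmod (k u)) \<le> C * fact n"
    and nonvanish: "\<And>a b. a < b \<Longrightarrow> \<not> (AE u in lborel. u \<in> {a<..<b} \<longrightarrow> k u = 0)"
    and fm[measurable]: "f \<in> borel_measurable borel" and fnn: "\<And>x. f x \<ge> 0"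
    and frep: "\<And>t. t \<ge> 0 \<Longrightarrow> complex_of_real (f t) = ft k t"
    and Dp: "prob_space (density lborel f)"
    and M1p: "prob_space \<mu>1" and s1[measurable_cong]: "sets \<mu>1 = sets borel"
    and ag1: "agree_on_nonneg \<mu>1 (density lborel f)"
    and ag2: "agree_on_nonneg (\<mu>1 \<star> \<mu>1) (density lborel f \<star> density lborel f)"
  shows "\<mu>1 = density lborel f"
proof -
  let ?D = "density lborel f"
  have sD[measurable_cong]: "sets ?D = sets borel" by simp
  interpret M1: prob_space \<mu>1 by fact
  interpret D: prob_space ?D by fact
  interpret M1s: sigma_finite_measure \<mu>1 by unfold_locales
  interpret Ds: sigma_finite_measure ?D by unfold_locales
  have fin1: "finite_measure \<mu>1" using M1p by (simp add: prob_space_def)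
  have finD: "finite_measure ?D" using Dp by (simp add: prob_space_def)
  have agD: "agree_on_nonneg ?D ?D" unfolding agree_on_nonneg_def by simp
  define Psi where "Psi M t = (\<integral>\<^sup>+y. indicator {..<0} y * ennreal (f (t - y)) \<partial>M)" for M t
  have Psi1m[measurable]: "Psi \<mu>1 \<in> borel_measurable borel"
    unfolding Psi_def[abs_def] by measurable
  have PsiDm[measurable]: "Psi ?D \<in> borel_measurable borel"
    unfolding Psi_def[abs_def] by measurable
  have Teq: "(\<integral>\<^sup>+t. indicator A t * Psi \<mu>1 t \<partial>lborel) = (\<integral>\<^sup>+t. indicator A t * Psi ?D t \<partial>lborel)"
    if A[measurable]: "A \<in> sets borel" and AP: "A \<subseteq> {0..}" for A
  proof -
    define K where "K = (\<integral>\<^sup>+x. indicator {0..} x * (\<integral>\<^sup>+y. indicator {0..} y * indicator A (x + y) \<partial>?D) \<partial>?D)"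
    have e1: "emeasure (\<mu>1 \<star> \<mu>1) A = K + 2 * (\<integral>\<^sup>+t. indicator A t * Psi \<mu>1 t \<partial>lborel)"
      unfolding K_def Psi_def by (rule conv_decomp[OF M1p s1 fm Dp ag1 A AP])
    have e2: "emeasure (?D \<star> ?D) A = K + 2 * (\<integral>\<^sup>+t. indicator A t * Psi ?D t \<partial>lborel)"
      unfolding K_def Psi_def by (rule conv_decomp[OF Dp sD fm Dp agD A AP])
    have e3: "emeasure (\<mu>1 \<star> \<mu>1) A = emeasure (?D \<star> ?D) A"
      using ag2 A AP unfolding agree_on_nonneg_def by auto
    have "finite_measure (?D \<star> ?D)" by (rule convolution_finite[OF finD finD sD sD])
    then have "emeasure (?D \<star> ?D) A < \<infinity>" using finite_measure.emeasure_finite[of "?D \<star> ?D" A] by (simp add: less_top)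
    then have Kf: "K \<noteq> \<infinity>" using e2 by (auto simp: top_unique)
    have "2 * (\<integral>\<^sup>+t. indicator A t * Psi \<mu>1 t \<partial>lborel) = 2 * (\<integral>\<^sup>+t. indicator A t * Psi ?D t \<partial>lborel)"
      using e1 e2 e3 Kf by (simp add: ennreal_add_left_cancel)
    then show ?thesis by (simp add: ennreal_mult_cancel_left)
  qed
  have "density lborel (\<lambda>t. indicator {0..} t * Psi \<mu>1 t) = density lborel (\<lambda>t. indicator {0..} t * Psi ?D t)"
  proof (rule measure_eqI)
    show "sets (density lborel (\<lambda>t. indicator {0..} t * Psi \<mu>1 t)) = sets (density lborel (\<lambda>t. indicator {0..} t * Psi ?D t))"
      by simp
    fix B assume "B \<in> sets (density lborel (\<lambda>t. indicator {0..} t * Psi \<mu>1 t))"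
    then have B[measurable]: "B \<in> sets borel" by simp
    have eq: "(\<integral>\<^sup>+t. indicator {0..} t * Psi M t * indicator B t \<partial>lborel) =
              (\<integral>\<^sup>+t. indicator ({0..} \<inter> B) t * Psi M t \<partial>lborel)" for M
      by (intro nn_integral_cong) (auto split: split_indicator)
    show "emeasure (density lborel (\<lambda>t. indicator {0..} t * Psi \<mu>1 t)) B =
          emeasure (density lborel (\<lambda>t. indicator {0..} t * Psi ?D t)) B"
      by (simp add: emeasure_density eq Teq)
  qed
  then have aePsi: "AE t in lborel. indicator {0..} t * Psi \<mu>1 t = indicator {0..} t * Psi ?D t"
    by (subst (asm) sigma_finite_measure.density_unique_iff[OF sigma_finite_lborel]) auto
  define \<alpha> where "\<alpha> = distr (density \<mu>1 (indicator {..<0})) borel uminus"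
  define \<beta> where "\<beta> = distr (density ?D (indicator {..<0})) borel uminus"
  note na = neg_part_facts[OF M1p s1 fm fnn, folded \<alpha>_def]
  note nb = neg_part_facts[OF Dp sD fm fnn, folded \<beta>_def]
  have "\<alpha> = \<beta>"
  proof (rule core_uniqueness[OF km mom bnd nonvanish fm frep na(1,2) nb(1,2) na(3) nb(3)])
    show "AE t in lborel. t \<ge> 0 \<longrightarrow> (\<integral>s. f (t + s) \<partial>\<alpha>) = (\<integral>s. f (t + s) \<partial>\<beta>)"
      using aePsi by eventually_elim (auto simp: na(4) nb(4) Psi_def split: split_indicator)
  qed
  then have negeq: "density \<mu>1 (indicator {..<0}) = density ?D (indicator {..<0})"
    using na(5) nb(5) by simp
  show ?thesis
  proof (rule measure_eqI)
    show "sets \<mu>1 = sets ?D" using s1 by simp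
    fix A assume "A \<in> sets \<mu>1"
    then have A[measurable]: "A \<in> sets borel" using s1 by simp
    have split: "emeasure M A = emeasure M (A \<inter> {0..}) + emeasure (density M (indicator {..<0})) A"
      if sM[measurable_cong]: "sets M = sets borel" for M :: "real measure"
    proof -
      have "emeasure (density M (indicator {..<0})) A = emeasure M ({..<0} \<inter> A)"
        by (subst emeasure_density) (auto simp: nn_integral_indicator[symmetric] indicator_inter_arith[symmetric] simp del: nn_integral_indicator)
      moreover have "emeasure M (A \<inter> {0..}) + emeasure M ({..<0} \<inter> A) = emeasure M ((A \<inter> {0..}) \<union> ({..<0} \<inter> A))"
        by (rule plus_emeasure) auto
      moreover have "(A \<inter> {0..}) \<union> ({..<0} \<inter> A) = A" by auto
      ultimately show ?thesis by simp
    qed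
    have "emeasure \<mu>1 (A \<inter> {0..}) = emeasure ?D (A \<inter> {0..})"
      using ag1 unfolding agree_on_nonneg_def by auto
    then show "emeasure \<mu>1 A = emeasure ?D A"
      using split[OF s1] split[OF sD] negeq by simp
  qed
qed



lemma limsup_bound:
  fixes a :: "nat \<Rightarrow> real"
  assumes "limsup (\<lambda>n. ereal (a n)) < \<infinity>"
  shows "\<exists>C. \<forall>n. a n \<le> C"
proof -
  obtain N :: nat where N: "limsup (\<lambda>n. ereal (a n)) < ereal (real N)"
    using assms less_PInf_Ex_of_nat by auto
  have "eventually (\<lambda>n. ereal (a n) < ereal (real N)) sequentially"
    by (rule Limsup_lessD[OF N])
  then obtain N0 where N0: "\<And>n. n \<ge> N0 \<Longrightarrow> a n < real N"
    unfolding eventually_sequentially by auto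
  define C where "C = real N + (\<Sum>n<N0. \<bar>a n\<bar>)"
  have s0: "(\<Sum>n<N0. \<bar>a n\<bar>) \<ge> 0" by (rule sum_nonneg) auto
  have "a n \<le> C" for n
  proof (cases "n < N0")
    case True
    have "a n \<le> \<bar>a n\<bar>" by simp
    also have "\<bar>a n\<bar> \<le> (\<Sum>n<N0. \<bar>a n\<bar>)"
      using True by (intro member_le_sum) auto
    finally show ?thesis unfolding C_def by simp
  next
    case False
    then show ?thesis using N0[of n] s0 unfolding C_def by linarith
  qed
  then show ?thesis by blast
qed

lemma part2:
  fixes k :: "real \<Rightarrow> complex" and f g :: "real \<Rightarrow> real" and C B :: real
  assumes km[measurable]: "k \<in> borel_measurable borel"
    and mom: "\<And>n. integrable lborel (\<lambda>u. \<bar>u\<bar> ^ n * cmod (k u))"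
    and bnd: "\<And>n. (LINT u|lborel. \<bar>u\<bar> ^ n * cmod (k u)) \<le> C * fact n"
    and nonvanish: "\<And>a b. a < b \<Longrightarrow> \<not> (AE u in lborel. u \<in> {a<..<b} \<longrightarrow> k u = 0)"
    and fm[measurable]: "f \<in> borel_measurable borel"
    and frep: "\<And>t. t \<ge> 0 \<Longrightarrow> complex_of_real (f t) = ft k t"
    and fB: "\<And>t. t \<ge> 0 \<Longrightarrow> \<bar>f t\<bar> \<le> B"
    and gi: "set_integrable lborel {0..} g"
    and hg: "\<forall>t\<ge>0. (LINT s:{0..}|lborel. f (t + s) * g s) = 0"
  shows "AE s in lborel. s \<ge> 0 \<longrightarrow> g s = 0"
proof -
  define h where "h s = indicator {0..} s * g s" for s
  have hi: "integrable lborel h" using gi unfolding set_integrable_def h_def by simp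
  have hm[measurable]: "h \<in> borel_measurable borel" using hi by auto
  have h0: "h s = 0" if "s < 0" for s using that unfolding h_def by simp
  have B0: "B \<ge> 0" using fB[of 0] by simp
  let ?a = "density lborel (\<lambda>s. ennreal (max 0 (h s)))"
  let ?b = "density lborel (\<lambda>s. ennreal (max 0 (- h s)))"
  have fa: "finite_measure ?a" by (rule finite_density_lborel[OF hi])
  have fb: "finite_measure ?b" by (rule finite_density_lborel) (use hi in auto)
  have neg0: "emeasure (density lborel (\<lambda>s. ennreal (max 0 (q s)))) {..<0} = 0"
    if q0: "\<And>s. s < 0 \<Longrightarrow> q s = 0" and [measurable]: "q \<in> borel_measurable borel" for q :: "real \<Rightarrow> real"
  proof -
    have z: "(\<lambda>s. ennreal (max 0 (q s)) * indicator {..<0} s) = (\<lambda>s. 0)"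
      by (rule ext) (auto simp: q0 split: split_indicator)
    show ?thesis by (subst emeasure_density, measurable, measurable, unfold z, simp)
  qed
  have intg: "integrable lborel (\<lambda>s. max 0 (q s) * f (t + s))"
    if "t \<ge> 0" and q: "q = h \<or> q = (\<lambda>s. - h s)" for q t
  proof (rule Bochner_Integration.integrable_bound[OF integrable_mult_right[OF integrable_abs[OF hi], of B]])
    have [measurable]: "q \<in> borel_measurable borel" using q by auto
    show "(\<lambda>s. max 0 (q s) * f (t + s)) \<in> borel_measurable lborel" by measurable
    show "AE s in lborel. norm (max 0 (q s) * f (t + s)) \<le> norm (B * \<bar>h s\<bar>)"
    proof (rule AE_I2)
      fix s
      show "norm (max 0 (q s) * f (t + s)) \<le> norm (B * \<bar>h s\<bar>)"
      proof (cases "s < 0")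
        case True then show ?thesis using q h0[OF True] by auto
      next
        case False
        then have "\<bar>f (t + s)\<bar> \<le> B" using fB that by simp
        moreover have "max 0 (q s) \<le> \<bar>h s\<bar>" using q by auto
        ultimately have "max 0 (q s) * \<bar>f (t + s)\<bar> \<le> \<bar>h s\<bar> * B"
          by (intro mult_mono) auto
        then show ?thesis using B0 by (simp add: abs_mult mult.commute)
      qed
    qed
  qed
  have ida: "(\<integral>s. f (t + s) \<partial>density lborel (\<lambda>s. ennreal (max 0 (q s)))) = (LINT s|lborel. max 0 (q s) * f (t + s))"
    if [measurable]: "q \<in> borel_measurable borel" for q t
    by (subst integral_density) auto
  have "?a = ?b"
  proof (rule core_uniqueness[OF km mom bnd nonvanish fm frep fa _ fb])
    show "sets ?a = sets borel" "sets ?b = sets borel" by auto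
    show "emeasure ?a {..<0} = 0" by (rule neg0) (auto simp: h0)
    show "emeasure ?b {..<0} = 0" by (rule neg0) (auto simp: h0)
    show "AE t in lborel. t \<ge> 0 \<longrightarrow> (\<integral>s. f (t + s) \<partial>?a) = (\<integral>s. f (t + s) \<partial>?b)"
    proof (rule AE_I2, intro impI)
      fix t :: real assume t: "t \<ge> 0"
      have "0 = (LINT s:{0..}|lborel. f (t + s) * g s)" using hg t by simp
      also have "\<dots> = (LINT s|lborel. max 0 (h s) * f (t + s) - max 0 (- h s) * f (t + s))"
        unfolding set_lebesgue_integral_def h_def
        by (intro Bochner_Integration.integral_cong) (auto simp: max_def algebra_simps split: split_indicator)
      also have "\<dots> = (LINT s|lborel. max 0 (h s) * f (t + s)) - (LINT s|lborel. max 0 (- h s) * f (t + s))"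
        by (rule Bochner_Integration.integral_diff) (auto intro!: intg t)
      finally have eq0: "0 = (LINT s|lborel. max 0 (h s) * f (t + s)) - (LINT s|lborel. max 0 (- h s) * f (t + s))" .
      have i1: "(\<integral>s. f (t + s) \<partial>?a) = (LINT s|lborel. max 0 (h s) * f (t + s))"
        by (rule ida) (rule hm)
      have i2: "(\<integral>s. f (t + s) \<partial>?b) = (LINT s|lborel. max 0 (- h s) * f (t + s))"
        by (rule ida) measurable
      show "(\<integral>s. f (t + s) \<partial>?a) = (\<integral>s. f (t + s) \<partial>?b)"
        unfolding i1 i2 using eq0 by simp
    qed
  qed
  then have "AE s in lborel. ennreal (max 0 (h s)) = ennreal (max 0 (- h s))"
    by (subst (asm) sigma_finite_measure.density_unique_iff[OF sigma_finite_lborel]) auto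
  then show ?thesis
    by eventually_elim (auto simp: h_def max_def split: if_splits split_indicator)
qed



theorem theorem3p9:
  fixes \<mu> :: "real measure" and f :: "real \<Rightarrow> real" and k :: "real \<Rightarrow> complex"
  assumes prob: "real_prob \<mu>"
    and f_meas: "f \<in> borel_measurable borel"
    and f_nonneg: "\<And>t. f t \<ge> 0"
    and dens: "\<mu> = density lborel f"
    and supp: "\<not> msupport \<mu> \<subseteq> {..<0}"
    and k_meas: "k \<in> borel_measurable borel"
    and f_repr: "\<And>t. t \<ge> 0 \<Longrightarrow>
        complex_of_real (f t) = (LINT u|lborel. exp (\<i> * complex_of_real (u * t)) * k u)"
    and moments: "\<And>n. integrable lborel (\<lambda>u. \<bar>u\<bar> ^ n * cmod (k u))"
    and limsup_mom: "limsup (\<lambda>n. ereal ((LINT u|lborel. \<bar>u\<bar> ^ n * cmod (k u)) / fact n)) < \<infinity>"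
    and nonvanish: "\<And>a b. a < b \<Longrightarrow> \<not> (AE u in lborel. u \<in> {a<..<b} \<longrightarrow> k u = 0)"
  shows "(\<exists>B. \<forall>t\<ge>0. \<bar>f t\<bar> \<le> B)
    \<and> (\<forall>g :: real \<Rightarrow> real. set_integrable lborel {0..} g \<longrightarrow>
          (\<forall>t\<ge>0. (LINT s:{0..}|lborel. f (t + s) * g s) = 0) \<longrightarrow>
          (AE s in lborel. s \<ge> 0 \<longrightarrow> g s = 0))
    \<and> (\<forall>\<mu>1. real_prob \<mu>1 \<and> agree_on_nonneg \<mu>1 \<mu> \<and> agree_on_nonneg (\<mu>1 \<star> \<mu>1) (\<mu> \<star> \<mu>)
           \<longrightarrow> \<mu>1 = \<mu>)
    \<and> \<mu> \<in> class_C
    \<and> real_analytic_on (\<lambda>t. LINT u|lborel. exp (\<i> * complex_of_real (u * t)) * k u) UNIV"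
proof -
  have probD: "prob_space (density lborel f)" and sD: "sets \<mu> = sets borel"
    using prob dens unfolding real_prob_def by auto
  have km[measurable]: "k \<in> borel_measurable borel" by (rule k_meas)
  have fm[measurable]: "f \<in> borel_measurable borel" by (rule f_meas)
  obtain C where C: "\<And>n. (LINT u|lborel. \<bar>u\<bar> ^ n * cmod (k u)) / fact n \<le> C"
    using limsup_bound[OF limsup_mom] by blast
  have bnd: "(LINT u|lborel. \<bar>u\<bar> ^ n * cmod (k u)) \<le> C * fact n" for n
    using C[of n] by (simp add: divide_le_eq mult.commute)
  have frep: "complex_of_real (f t) = ft k t" if "t \<ge> 0" for t
    unfolding ft_def using f_repr[OF that] .
  define B where "B = (LINT u|lborel. cmod (k u))"
  have fB: "\<bar>f t\<bar> \<le> B" if "t \<ge> 0" for t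
  proof -
    have "\<bar>f t\<bar> = norm (ft k t)" using frep[OF that] by (metis norm_of_real)
    also have "\<dots> \<le> (LINT u|lborel. norm (exp (\<i> * complex_of_real (u * t)) * k u))"
      unfolding ft_def by (rule integral_norm_bound)
    also have "\<dots> = B" unfolding B_def by (simp add: norm_mult norm_exp_i_times)
    finally show ?thesis .
  qed
  have P1: "\<exists>B. \<forall>t\<ge>0. \<bar>f t\<bar> \<le> B" using fB by blast
  have P2: "\<forall>g :: real \<Rightarrow> real. set_integrable lborel {0..} g \<longrightarrow>
          (\<forall>t\<ge>0. (LINT s:{0..}|lborel. f (t + s) * g s) = 0) \<longrightarrow>
          (AE s in lborel. s \<ge> 0 \<longrightarrow> g s = 0)"
    using part2[OF km moments bnd nonvanish fm frep fB] by blast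
  have P3: "\<forall>\<mu>1. real_prob \<mu>1 \<and> agree_on_nonneg \<mu>1 \<mu> \<and> agree_on_nonneg (\<mu>1 \<star> \<mu>1) (\<mu> \<star> \<mu>)
           \<longrightarrow> \<mu>1 = \<mu>"
  proof (intro allI impI)
    fix \<mu>1 assume a: "real_prob \<mu>1 \<and> agree_on_nonneg \<mu>1 \<mu> \<and> agree_on_nonneg (\<mu>1 \<star> \<mu>1) (\<mu> \<star> \<mu>)"
    then have "\<mu>1 = density lborel f"
      using part3[OF km moments bnd nonvanish fm f_nonneg frep probD] dens
      unfolding real_prob_def by auto
    then show "\<mu>1 = \<mu>" using dens by simp
  qed
  have P4: "\<mu> \<in> class_C"
    unfolding class_C_def
  proof (intro CollectI conjI allI impI)
    show "real_prob \<mu>" by (rule prob)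
    fix \<mu>1 assume a: "real_prob \<mu>1 \<and> (\<forall>n\<ge>1. agree_on_nonneg (conv_pow \<mu>1 n) (conv_pow \<mu> n))"
    have c1: "conv_pow M 1 = M" for M by simp
    have c2: "conv_pow M 2 = (M \<star> M)" for M by (simp add: numeral_2_eq_2)
    have "agree_on_nonneg \<mu>1 \<mu>" using a c1[of \<mu>1] c1[of \<mu>] by (metis order_refl)
    moreover have "agree_on_nonneg (\<mu>1 \<star> \<mu>1) (\<mu> \<star> \<mu>)"
      using a c2[of \<mu>1] c2[of \<mu>] by (metis one_le_numeral)
    ultimately show "\<mu>1 = \<mu>" using P3 a by blast
  qed
  have P5: "real_analytic_on (\<lambda>t. LINT u|lborel. exp (\<i> * complex_of_real (u * t)) * k u) UNIV"
    unfolding real_analytic_on_def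
  proof (intro ballI exI[of _ "1::real"] conjI)
    fix x :: real
    show "(1::real) > 0" by simp
    show "\<exists>c. \<forall>t\<in>ball x 1. (\<lambda>n. c n * complex_of_real ((t - x) ^ n)) sums
        (LINT u|lborel. exp (\<i> * complex_of_real (u * t)) * k u)"
    proof (intro exI[of _ "coef k x"] ballI)
      fix t assume "t \<in> ball x (1::real)"
      then have "\<bar>t - x\<bar> < 1" by (simp add: dist_real_def abs_minus_commute)
      from ft_series[OF km moments bnd this] show
        "(\<lambda>n. coef k x n * complex_of_real ((t - x) ^ n)) sums (LINT u|lborel. exp (\<i> * complex_of_real (u * t)) * k u)"
        unfolding ft_def .
    qed
  qed
  show ?thesis using P1 P2 P3 P4 P5 by blast
qed


end
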